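(* Let $\gamma$ denote the Euler–Mascheroni constant, $\gamma=\lim_{n\to\infty}\left(\sum_{m=1}^{n}\frac1m-\ln n\right)$. Define the rational numbers $a_1=\frac12$, $a_2=\frac16$, $a_4=\frac35$, $a_6=\frac{79}{126}$, $a_8=\frac{7230}{6241}$, $a_{10}=\frac{4146631}{3833346}$, $a_{12}=\frac{306232774533}{179081182865}$, and $a_{2k+1}=-a_{2k}$ for $1\le k\le 6$ (so $a_3=-\frac16$, $a_5=-\frac35$, \dots, $a_{13}=-\frac{306232774533}{179081182865}$). For a positive integer $n$ define $R_1(n)=\frac{a_1}{n}$ and, for $2\le k\le 13$, the finite continued fraction $$R_k(n)=\cfrac{a_1}{n+\cfrac{a_2 n}{n+\cfrac{a_3 n}{n+\cfrac{\ddots}{n+\cfrac{a_{k-1}n}{n+a_k}}}}},$$ i.e. $R_k(n)=a_1/T_2$ where $T_k=n+a_k$ and $T_j=n+\frac{a_j n}{T_{j+1}}$ for $2\le j\le k-1$. Let $$r_k(n)=\sum_{m=1}^{n}\frac1m-\ln n-R_k(n).$$ Then for every $1\le k\le 13$, $$\lim_{n\to\infty} n^{k+1}\bigl(r_k(n)-\gamma\bigr)=C_k,$$ where $(C_1,\dots,C_{13})=\Bigl(-\frac{1}{12},-\frac{1}{72},\frac{1}{120},\frac{1}{200},-\frac{79}{25200},-\frac{6241}{3175200},\frac{241}{105840},\frac{58081}{22018248},-\frac{262445}{91974960},-\frac{2755095121}{892586949408},\frac{20169451}{3821257440},\frac{406806753641401}{45071152103463200},-\frac{71521421431}{5152068292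800}\Bigr)$.
   Context: $\gamma$ is the Euler–Mascheroni constant. The continued fraction $R_k(n)$ terminates with the denominator $n+a_k$ (not $n+a_kn/\cdots$); for example $R_2(n)=\frac{a_1}{n+a_2}=\frac{3}{6n+1}$ and $R_3(n)=\frac{1}{2n}-\frac{1}{12n^2}$. *)

theory Defs
  imports "HOL-Analysis.Analysis"
begin

definition cf_a_even :: "nat \<Rightarrow> real" where
  "cf_a_even j = (if j = 2 then 1/6
     else if j = 4 then 3/5
     else if j = 6 then 79/126
     else if j = 8 then 7230/6241
     else if j = 10 then 4146631/3833346
     else if j = 12 then 306232774533/179081182865
     else 0)"

definition cf_a :: "nat \<Rightarrow> real" where
  "cf_a j = (if j = 1 then 1/2
     else if even j \<and> 2 \<le> j \<and> j \<le> 12 then cf_a_even j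
     else if odd j \<and> 3 \<le> j \<and> j \<le> 13 then - cf_a_even (j - 1)
     else 0)"

text \<open>T_2 for depth k \<ge> 2: T_k = n + a_k, T_j = n + a_j n / T_{j+1} for 2 <= j <= k-1.\<close>
definition cf_T2 :: "nat \<Rightarrow> real \<Rightarrow> real" where
  "cf_T2 k x = foldr (\<lambda>j acc. x + cf_a j * x / acc) [2..<k] (x + cf_a k)"

definition cf_R :: "nat \<Rightarrow> nat \<Rightarrow> real" where
  "cf_R k n = (if k = 1 then cf_a 1 / real n else cf_a 1 / cf_T2 k (real n))"

definition cf_r :: "nat \<Rightarrow> nat \<Rightarrow> real" where
  "cf_r k n = (\<Sum>m=1..n. 1 / real m) - ln (real n) - cf_R k n"

definition cf_C :: "nat \<Rightarrow> real" where
  "cf_C k = [-1/12, -1/72, 1/120, 1/200, -79/25200, -6241/3175200, 241/105840,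
             58081/22018248, -262445/91974960, -2755095121/892586949408,
             20169451/3821257440, 406806753641401/45071152103463200,
             -71521421431/5152068292800] ! (k - 1)"

end

theory Submission
  imports Defs "HOL-Real_Asymp.Real_Asymp" "HOL-Computational_Algebra.Polynomial"
begin

definition PP :: "real \<Rightarrow> real" where
 "PP x = 1/(2*x) - 1/(12*x^2) + 1/(120*x^4) - 1/(252*x^6) + 1/(240*x^8) - 1/(132*x^10) + 691/(32760*x^12) - 1/(12*x^14)"

lemma delta_bigo:
  "(\<lambda>x::real. ln(x+1) - ln x - 1/(x+1) - PP x + PP(x+1)) \<in> O[at_top](\<lambda>x. 1/x^15 - 1/(x+1)^15)"
  unfolding PP_def by real_asymp

lemma tail_bound:
  fixes E w :: "nat \<Rightarrow> real"
  assumes E0: "E \<longlonglongrightarrow> 0" and w0: "w \<longlonglongrightarrow> 0"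
    and H: "\<And>n. n \<ge> N \<Longrightarrow> \<bar>E n - E (Suc n)\<bar> \<le> c * (w n - w (Suc n))"
    and nN: "n \<ge> N"
  shows "\<bar>E n\<bar> \<le> c * w n"
proof -
  have step: "\<bar>E n - E (M + n)\<bar> \<le> c * (w n - w (M + n))" for M
  proof (induction M)
    case 0 then show ?case by simp
  next
    case (Suc M)
    have "\<bar>E n - E (Suc M + n)\<bar> \<le> \<bar>E n - E (M + n)\<bar> + \<bar>E (M+n) - E (Suc (M + n))\<bar>"
      by simp
    also have "\<dots> \<le> c * (w n - w (M + n)) + c * (w (M+n) - w (Suc (M + n)))"
      using Suc H[of "M+n"] nN by simp
    finally show ?case by (simp add: algebra_simps)
  qed
  have l1: "(\<lambda>M. \<bar>E n - E (M + n)\<bar>) \<longlonglongrightarrow> \<bar>E n - 0\<bar>"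
    by (intro tendsto_intros LIMSEQ_ignore_initial_segment E0)
  have l2: "(\<lambda>M. c * (w n - w (M + n))) \<longlonglongrightarrow> c * (w n - 0)"
    by (intro tendsto_intros LIMSEQ_ignore_initial_segment w0)
  have "\<bar>E n - 0\<bar> \<le> c * (w n - 0)"
    by (rule LIMSEQ_le[OF l1 l2]) (use step in auto)
  then show ?thesis by simp
qed

definition EE :: "nat \<Rightarrow> real" where
  "EE n = harm n - ln (real n) - euler_mascheroni - PP (real n)"

lemma EE_tendsto: "EE \<longlonglongrightarrow> 0"
proof -
  have "(\<lambda>n. PP (real n)) \<longlonglongrightarrow> 0" unfolding PP_def by real_asymp
  then have "(\<lambda>n. (harm n - ln (real n)) - euler_mascheroni - PP (real n)) \<longlonglongrightarrow> euler_mascheroni - euler_mascheroni - 0"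
    by (intro tendsto_intros euler_mascheroni_LIMSEQ)
  then show ?thesis unfolding EE_def[abs_def] by simp
qed

lemma EE_diff:
  assumes "n \<ge> 1"
  shows "EE n - EE (Suc n) = ln(real n+1) - ln (real n) - 1/(real n+1) - PP (real n) + PP(real n+1)"
  unfolding EE_def by (simp add: harm_Suc inverse_eq_divide add.commute)

lemma EE_bound: "\<exists>c N. \<forall>n\<ge>N. \<bar>EE n\<bar> \<le> c * (1 / real n ^ 15)"
proof -
  obtain c where "eventually (\<lambda>x. norm (ln(x+1) - ln x - 1/(x+1) - PP x + PP(x+1)) \<le> c * norm (1/x^15 - 1/(x+1)^15)) at_top"
    using delta_bigo by (elim landau_o.bigE) auto
  then obtain X where X: "\<And>x::real. x \<ge> X \<Longrightarrow> \<bar>ln(x+1) - ln x - 1/(x+1) - PP x + PP(x+1)\<bar> \<le> c * \<bar>1/x^15 - 1/(x+1)^15\<bar>"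
    by (auto simp: eventually_at_top_linorder)
  define N where "N = max 1 (nat \<lceil>X\<rceil>)"
  have H: "\<bar>EE n - EE (Suc n)\<bar> \<le> c * (1 / real n ^ 15 - 1 / real (Suc n) ^ 15)" if "n \<ge> N" for n
  proof -
    have n1: "n \<ge> 1" and nX: "real n \<ge> X" using that unfolding N_def by linarith+
    have pos: "1 / real (Suc n) ^ 15 \<le> 1 / real n ^ 15"
      using n1 by (intro divide_left_mono power_mono mult_pos_pos) auto
    show ?thesis using X[OF nX] EE_diff[OF n1] pos by (simp add: add.commute)
  qed
  have w0: "(\<lambda>n. 1 / real n ^ 15) \<longlonglongrightarrow> 0" by real_asymp
  show ?thesis
    using tail_bound[OF EE_tendsto w0 H] by blast
qed

lemma EE_small:
  assumes "k \<le> 13"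
  shows "(\<lambda>n. real n ^ (k+1) * EE n) \<longlonglongrightarrow> 0"
proof -
  obtain c N where cN: "\<And>n. n \<ge> N \<Longrightarrow> \<bar>EE n\<bar> \<le> c * (1 / real n ^ 15)"
    using EE_bound by blast
  have g: "(\<lambda>n. \<bar>c\<bar> / real n) \<longlonglongrightarrow> 0" by real_asymp
  show ?thesis
  proof (rule Lim_null_comparison[OF _ g], rule eventually_sequentiallyI[of "max N 1"])
    fix n assume n: "n \<ge> max N 1"
    then have n1: "real n \<ge> 1" and nN: "n \<ge> N" by auto
    have "norm (real n ^ (k+1) * EE n) = real n ^ (k+1) * \<bar>EE n\<bar>" by (simp add: abs_mult)
    also have "\<dots> \<le> real n ^ 14 * (\<bar>c\<bar> * (1 / real n ^ 15))"
    proof (rule mult_mono)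
      show "real n ^ (k+1) \<le> real n ^ 14" using n1 assms by (intro power_increasing) auto
      show "\<bar>EE n\<bar> \<le> \<bar>c\<bar> * (1 / real n ^ 15)"
        using cN[OF nN] by (smt (verit) mult_right_mono zero_le_divide_1_iff zero_le_power n1)
    qed (use n1 in auto)
    also have "\<dots> = \<bar>c\<bar> / real n" using n1 by (simp add: field_simps eval_nat_numeral)
    finally show "norm (real n ^ (k+1) * EE n) \<le> \<bar>c\<bar> / real n" .
  qed
qed

definition Gstep :: "nat \<Rightarrow> real poly \<times> real poly \<Rightarrow> real poly \<times> real poly" where
  "Gstep j pq = (pCons 0 (fst pq + smult (cf_a j) (snd pq)), fst pq)"

definition G :: "nat list \<Rightarrow> real poly \<times> real poly \<Rightarrow> real poly \<times> real poly" where
  "G js pq = foldr Gstep js pq"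

fun pnz :: "nat list \<Rightarrow> real poly \<times> real poly \<Rightarrow> bool" where
  "pnz [] pq = (fst pq \<noteq> 0 \<and> snd pq \<noteq> 0)"
| "pnz (j # js) pq = (pnz js pq \<and> fst (G (j # js) pq) \<noteq> 0)"

fun rnz :: "real \<Rightarrow> nat list \<Rightarrow> real poly \<times> real poly \<Rightarrow> bool" where
  "rnz x [] pq = (poly (fst pq) x \<noteq> 0 \<and> poly (snd pq) x \<noteq> 0)"
| "rnz x (j # js) pq = (rnz x js pq \<and> poly (fst (G (j # js) pq)) x \<noteq> 0)"

lemma pnz_eventually: "pnz js pq \<Longrightarrow> eventually (\<lambda>x. rnz x js pq) at_top"
proof (induction js)
  case Nil
  then show ?case
    using filter_leD[OF at_top_le_at_infinity poly_eventually_not_zero[of "fst pq"]]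
          filter_leD[OF at_top_le_at_infinity poly_eventually_not_zero[of "snd pq"]]
    by (auto elim: eventually_elim2)
next
  case (Cons j js)
  then show ?case
    using filter_leD[OF at_top_le_at_infinity poly_eventually_not_zero[of "fst (G (j # js) pq)"]]
    by (auto elim: eventually_elim2)
qed

lemma rnz_fold:
  "rnz x js pq \<Longrightarrow>
     poly (fst (G js pq)) x \<noteq> 0 \<and> poly (snd (G js pq)) x \<noteq> 0 \<and>
     foldr (\<lambda>j acc. x + cf_a j * x / acc) js (poly (fst pq) x / poly (snd pq) x)
       = poly (fst (G js pq)) x / poly (snd (G js pq)) x"
proof (induction js)
  case Nil
  then show ?case by (simp add: G_def)
next
  case (Cons j js)
  then have IH: "poly (fst (G js pq)) x \<noteq> 0" "poly (snd (G js pq)) x \<noteq> 0"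
    "foldr (\<lambda>j acc. x + cf_a j * x / acc) js (poly (fst pq) x / poly (snd pq) x)
       = poly (fst (G js pq)) x / poly (snd (G js pq)) x"
    and nz: "poly (fst (G (j # js) pq)) x \<noteq> 0" by auto
  have GG: "G (j # js) pq = Gstep j (G js pq)" by (simp add: G_def)
  define P where "P = poly (fst (G js pq)) x"
  define Q where "Q = poly (snd (G js pq)) x"
  have PQ: "P \<noteq> 0" "Q \<noteq> 0" using IH unfolding P_def Q_def by auto
  have e1: "poly (fst (G (j # js) pq)) x = x * (P + cf_a j * Q)"
    unfolding GG P_def Q_def by (simp add: Gstep_def)
  have e2: "poly (snd (G (j # js) pq)) x = P"
    unfolding GG P_def Q_def by (simp add: Gstep_def)
  have e3: "foldr (\<lambda>j acc. x + cf_a j * x / acc) (j # js) (poly (fst pq) x / poly (snd pq) x)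
      = x + cf_a j * x / (P / Q)"
    using IH(3) unfolding P_def Q_def by simp
  have "x + cf_a j * x / (P / Q) = x * (P + cf_a j * Q) / P"
    using PQ by (simp add: field_simps)
  then show ?case
    using nz PQ unfolding e1 e2 e3 by simp
qed

lemma cf_T2_eq:
  assumes "rnz x [2..<k] ([:cf_a k, 1:], 1)"
  shows "cf_T2 k x = poly (fst (G [2..<k] ([:cf_a k, 1:], 1))) x / poly (snd (G [2..<k] ([:cf_a k, 1:], 1))) x"
proof -
  have "x + cf_a k = poly (fst ([:cf_a k, 1:], 1::real poly)) x / poly (snd ([:cf_a k, 1:], 1::real poly)) x"
    by simp
  then show ?thesis using rnz_fold[OF assms] unfolding cf_T2_def by metis
qed

lemma cf_a_1: "cf_a 1 = 1/2" by (simp add: cf_a_def)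

lemma mp1: "((\<lambda>n. real n ^ (1 + 1) * (PP (real n) - cf_R 1 n)) \<longlongrightarrow> cf_C 1) sequentially"
  by (simp add: cf_R_def cf_a_def cf_C_def PP_def; real_asymp)

definition Sp :: "real poly" where "Sp = [:- 1/12, 0, 691/32760, 0, - 1/132, 0, 1/240, 0, - 1/252, 0, 1/120, 0, - 1/12, 1/2:]"

definition X14 :: "real poly" where "X14 = [:0,0,0,0,0,0,0,0,0,0,0,0,0,0,1:]"

lemma poly_X14: "poly X14 x = x ^ 14"
  by (simp add: X14_def poly_pCons eval_nat_numeral)

lemma PP_Sp: "x \<noteq> 0 \<Longrightarrow> PP x = poly Sp x / x ^ 14"
  by (simp add: PP_def Sp_def poly_pCons field_simps eval_nat_numeral)

lemma alg:
  fixes x u v w :: real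
  assumes "x \<noteq> 0" "v \<noteq> 0" "k \<le> 13"
  shows "x ^ (k+1) * (u / x ^ 14 - 1/2 * w / v) = (2 * u * v - x ^ 14 * w) / (2 * x ^ (13-k) * v)"
proof -
  have kk: "k + 1 + (13 - k) = 14" using assms(3) by simp
  have e: "x ^ 14 = x ^ (k+1) * x ^ (13-k)" by (metis kk power_add)
  show ?thesis unfolding e using assms(1,2) by (simp add: field_simps)
qed

lemma mp_general:
  assumes k2: "k \<ge> 2" "k \<le> 13" and pnz: "pnz [2..<k] ([:cf_a k, 1:], 1)"
    and NN: "smult 2 (Sp * fst (G [2..<k] ([:cf_a k, 1:], 1))) - X14 * snd (G [2..<k] ([:cf_a k, 1:], 1)) = N"
    and lim: "((\<lambda>x. poly N x / (2 * x ^ (13 - k) * poly (fst (G [2..<k] ([:cf_a k, 1:], 1))) x)) \<longlongrightarrow> c) at_top"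
  shows "((\<lambda>n. real n ^ (k + 1) * (PP (real n) - cf_R k n)) \<longlongrightarrow> c) sequentially"
proof -
  define P where "P = fst (G [2..<k] ([:cf_a k, 1:], 1))"
  define Q where "Q = snd (G [2..<k] ([:cf_a k, 1:], 1))"
  have ev: "eventually (\<lambda>x. poly N x / (2 * x ^ (13 - k) * poly P x) = x ^ (k+1) * (PP x - cf_a 1 / cf_T2 k x)) at_top"
    using eventually_conj[OF pnz_eventually[OF pnz] eventually_gt_at_top[of 0]]
  proof eventually_elim
    case (elim x)
    then have x0: "x \<noteq> 0" by simp
    from rnz_fold[OF conjunct1[OF elim]] have nz: "poly P x \<noteq> 0" "poly Q x \<noteq> 0"
      unfolding P_def Q_def by auto
    have T: "cf_T2 k x = poly P x / poly Q x"
      using cf_T2_eq[OF conjunct1[OF elim]] unfolding P_def Q_def .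
    have Nx: "poly N x = 2 * poly Sp x * poly P x - x ^ 14 * poly Q x"
      using NN unfolding P_def[symmetric] Q_def[symmetric] by (auto simp: poly_X14)
    have "cf_a 1 / cf_T2 k x = 1/2 * poly Q x / poly P x"
      using nz by (simp add: T cf_a_def)
    then show ?case
      using alg[OF x0 nz(1) k2(2), of "poly Sp x" "poly Q x"] by (simp add: PP_Sp[OF x0] Nx)
  qed
  have "((\<lambda>x. x ^ (k+1) * (PP x - cf_a 1 / cf_T2 k x)) \<longlongrightarrow> c) at_top"
    using tendsto_cong[OF ev] lim unfolding P_def by simp
  then have "((\<lambda>n. real n ^ (k+1) * (PP (real n) - cf_a 1 / cf_T2 k (real n))) \<longlongrightarrow> c) sequentially"
    by (rule filterlim_compose[OF _ filterlim_real_sequentially])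
  then show ?thesis using k2 by (simp add: cf_R_def)
qed

lemma mp2: "((\<lambda>n. real n ^ (2 + 1) * (PP (real n) - cf_R 2 n)) \<longlongrightarrow> cf_C 2) sequentially"
proof -
  have GG: "G [2..<2] ([:cf_a 2, 1:], 1) = ([:1/6, 1:], [:1:])"
    by (simp add: G_def Gstep_def upt_rec cf_a_def cf_a_even_def one_pCons)
  have C: "cf_C 2 = - 1/72" by (simp add: cf_C_def)
  show ?thesis
  proof (rule mp_general)
    show "pnz [2..<2] ([:cf_a 2, 1:], 1)"
      by (simp add: G_def Gstep_def upt_rec cf_a_def cf_a_even_def one_pCons)
    show "smult 2 (Sp * fst (G [2..<2] ([:cf_a 2, 1:], 1))) - X14 * snd (G [2..<2] ([:cf_a 2, 1:], 1)) = [:- 1/36, - 1/6, 691/98280, 691/16380, - 1/396, - 1/66, 1/720, 1/120, - 1/756, - 1/126, 1/360, 1/60, - 1/36:]"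
      unfolding GG by (simp add: Sp_def X14_def)
    show "((\<lambda>x. poly [:- 1/36, - 1/6, 691/98280, 691/16380, - 1/396, - 1/66, 1/720, 1/120, - 1/756, - 1/126, 1/360, 1/60, - 1/36:] x / (2 * x ^ (13 - 2) * poly (fst (G [2..<2] ([:cf_a 2, 1:], 1))) x)) \<longlongrightarrow> cf_C 2) at_top"
      unfolding GG C fst_conv poly_pCons poly_0 by real_asymp
  qed simp_all
qed

lemma mp3: "((\<lambda>n. real n ^ (3 + 1) * (PP (real n) - cf_R 3 n)) \<longlongrightarrow> cf_C 3) sequentially"
proof -
  have GG: "G [2..<3] ([:cf_a 3, 1:], 1) = ([:0, 0, 1:], [:- 1/6, 1:])"
    by (simp add: G_def Gstep_def upt_rec cf_a_def cf_a_even_def one_pCons)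
  have C: "cf_C 3 = 1/120" by (simp add: cf_C_def)
  show ?thesis
  proof (rule mp_general)
    show "pnz [2..<3] ([:cf_a 3, 1:], 1)"
      by (simp add: G_def Gstep_def upt_rec cf_a_def cf_a_even_def one_pCons)
    show "smult 2 (Sp * fst (G [2..<3] ([:cf_a 3, 1:], 1))) - X14 * snd (G [2..<3] ([:cf_a 3, 1:], 1)) = [:0, 0, - 1/6, 0, 691/16380, 0, - 1/66, 0, 1/120, 0, - 1/126, 0, 1/60:]"
      unfolding GG by (simp add: Sp_def X14_def)
    show "((\<lambda>x. poly [:0, 0, - 1/6, 0, 691/16380, 0, - 1/66, 0, 1/120, 0, - 1/126, 0, 1/60:] x / (2 * x ^ (13 - 3) * poly (fst (G [2..<3] ([:cf_a 3, 1:], 1))) x)) \<longlongrightarrow> cf_C 3) at_top"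
      unfolding GG C fst_conv poly_pCons poly_0 by real_asymp
  qed simp_all
qed

lemma mp4: "((\<lambda>n. real n ^ (4 + 1) * (PP (real n) - cf_R 4 n)) \<longlongrightarrow> cf_C 4) sequentially"
proof -
  have GG: "G [2..<4] ([:cf_a 4, 1:], 1) = ([:0, 1/10, 3/5, 1:], [:0, 13/30, 1:])"
    by (simp add: G_def Gstep_def upt_rec cf_a_def cf_a_even_def one_pCons)
  have C: "cf_C 4 = 1/200" by (simp add: cf_C_def)
  show ?thesis
  proof (rule mp_general)
    show "pnz [2..<4] ([:cf_a 4, 1:], 1)"
      by (simp add: G_def Gstep_def upt_rec cf_a_def cf_a_even_def one_pCons)
    show "smult 2 (Sp * fst (G [2..<4] ([:cf_a 4, 1:], 1))) - X14 * snd (G [2..<4] ([:cf_a 4, 1:], 1)) = [:0, - 1/60, - 1/10, - 26609/163800, 691/27300, 1832/45045, - 1/110, - 63/4400, 1/200, 19/2520, - 1/210, - 79/12600, 1/100:]"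
      unfolding GG by (simp add: Sp_def X14_def)
    show "((\<lambda>x. poly [:0, - 1/60, - 1/10, - 26609/163800, 691/27300, 1832/45045, - 1/110, - 63/4400, 1/200, 19/2520, - 1/210, - 79/12600, 1/100:] x / (2 * x ^ (13 - 4) * poly (fst (G [2..<4] ([:cf_a 4, 1:], 1))) x)) \<longlongrightarrow> cf_C 4) at_top"
      unfolding GG C fst_conv poly_pCons poly_0 by real_asymp
  qed simp_all
qed

lemma mp5: "((\<lambda>n. real n ^ (5 + 1) * (PP (real n) - cf_R 5 n)) \<longlongrightarrow> cf_C 5) sequentially"
proof -
  have GG: "G [2..<5] ([:cf_a 5, 1:], 1) = ([:0, 0, 1/10, 0, 1:], [:0, 1/10, - 1/6, 1:])"
    by (simp add: G_def Gstep_def upt_rec cf_a_def cf_a_even_def one_pCons)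
  have C: "cf_C 5 = - 79/25200" by (simp add: cf_C_def)
  show ?thesis
  proof (rule mp_general)
    show "pnz [2..<5] ([:cf_a 5, 1:], 1)"
      by (simp add: G_def Gstep_def upt_rec cf_a_def cf_a_even_def one_pCons)
    show "smult 2 (Sp * fst (G [2..<5] ([:cf_a 5, 1:], 1))) - X14 * snd (G [2..<5] ([:cf_a 5, 1:], 1)) = [:0, 0, - 1/60, 0, - 26609/163800, 0, 1832/45045, 0, - 63/4400, 0, 19/2520, 0, - 79/12600:]"
      unfolding GG by (simp add: Sp_def X14_def)
    show "((\<lambda>x. poly [:0, 0, - 1/60, 0, - 26609/163800, 0, 1832/45045, 0, - 63/4400, 0, 19/2520, 0, - 79/12600:] x / (2 * x ^ (13 - 5) * poly (fst (G [2..<5] ([:cf_a 5, 1:], 1))) x)) \<longlongrightarrow> cf_C 5) at_top"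
      unfolding GG C fst_conv poly_pCons poly_0 by real_asymp
  qed simp_all
qed

lemma mp6: "((\<lambda>n. real n ^ (6 + 1) * (PP (real n) - cf_R 6 n)) \<longlongrightarrow> cf_C 6) sequentially"
proof -
  have GG: "G [2..<6] ([:cf_a 6, 1:], 1) = ([:0, 0, 79/1260, 10/21, 79/126, 1:], [:0, 0, 281/756, 29/63, 1:])"
    by (simp add: G_def Gstep_def upt_rec cf_a_def cf_a_even_def one_pCons)
  have C: "cf_C 6 = - 6241/3175200" by (simp add: cf_C_def)
  show ?thesis
  proof (rule mp_general)
    show "pnz [2..<6] ([:cf_a 6, 1:], 1)"
      by (simp add: G_def Gstep_def upt_rec cf_a_def cf_a_even_def one_pCons)
    show "smult 2 (Sp * fst (G [2..<6] ([:cf_a 6, 1:], 1))) - X14 * snd (G [2..<6] ([:cf_a 6, 1:], 1)) = [:0, 0, - 79/7560, - 5/63, - 2102111/20638800, - 2521/17199, 72364/2837835, 6301/180180, - 79/8800, - 31/2772, 1501/317520, 241/52920, - 6241/1587600:]"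
      unfolding GG by (simp add: Sp_def X14_def)
    show "((\<lambda>x. poly [:0, 0, - 79/7560, - 5/63, - 2102111/20638800, - 2521/17199, 72364/2837835, 6301/180180, - 79/8800, - 31/2772, 1501/317520, 241/52920, - 6241/1587600:] x / (2 * x ^ (13 - 6) * poly (fst (G [2..<6] ([:cf_a 6, 1:], 1))) x)) \<longlongrightarrow> cf_C 6) at_top"
      unfolding GG C fst_conv poly_pCons poly_0 by real_asymp
  qed simp_all
qed

lemma mp7: "((\<lambda>n. real n ^ (7 + 1) * (PP (real n) - cf_R 7 n)) \<longlongrightarrow> cf_C 7) sequentially"
proof -
  have GG: "G [2..<7] ([:cf_a 7, 1:], 1) = ([:0, 0, 0, 0, 10/21, 0, 1:], [:0, 0, - 79/1260, 10/21, - 1/6, 1:])"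
    by (simp add: G_def Gstep_def upt_rec cf_a_def cf_a_even_def one_pCons)
  have C: "cf_C 7 = 241/105840" by (simp add: cf_C_def)
  show ?thesis
  proof (rule mp_general)
    show "pnz [2..<7] ([:cf_a 7, 1:], 1)"
      by (simp add: G_def Gstep_def upt_rec cf_a_def cf_a_even_def one_pCons)
    show "smult 2 (Sp * fst (G [2..<7] ([:cf_a 7, 1:], 1))) - X14 * snd (G [2..<7] ([:cf_a 7, 1:], 1)) = [:0, 0, 0, 0, - 5/63, 0, - 2521/17199, 0, 6301/180180, 0, - 31/2772, 0, 241/52920:]"
      unfolding GG by (simp add: Sp_def X14_def)
    show "((\<lambda>x. poly [:0, 0, 0, 0, - 5/63, 0, - 2521/17199, 0, 6301/180180, 0, - 31/2772, 0, 241/52920:] x / (2 * x ^ (13 - 7) * poly (fst (G [2..<7] ([:cf_a 7, 1:], 1))) x)) \<longlongrightarrow> cf_C 7) at_top"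
      unfolding GG C fst_conv poly_pCons poly_0 by real_asymp
  qed simp_all
qed

lemma mp8: "((\<lambda>n. real n ^ (8 + 1) * (PP (real n) - cf_R 8 n)) \<longlongrightarrow> cf_C 8) sequentially"
proof -
  have GG: "G [2..<8] ([:cf_a 8, 1:], 1) = ([:0, 0, 0, 241/3318, 24100/43687, 95/79, 7230/6241, 1:], [:0, 0, 0, 964337/2621220, 6300/6241, 37139/37446, 1:])"
    by (simp add: G_def Gstep_def upt_rec cf_a_def cf_a_even_def one_pCons)
  have C: "cf_C 8 = 58081/22018248" by (simp add: cf_C_def)
  show ?thesis
  proof (rule mp_general)
    show "pnz [2..<8] ([:cf_a 8, 1:], 1)"
      by (simp add: G_def Gstep_def upt_rec cf_a_def cf_a_even_def one_pCons)
    show "smult 2 (Sp * fst (G [2..<8] ([:cf_a 8, 1:], 1))) - X14 * snd (G [2..<8] ([:cf_a 8, 1:], 1)) = [:0, 0, 0, - 241/19908, - 12050/131061, - 10726169/54348840, - 6075610/35779653, - 83297/711711, 1518541/37483446, 1398979/56936880, - 37355/2883342, - 52489/9197496, 58081/11009124:]"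
      unfolding GG by (simp add: Sp_def X14_def)
    show "((\<lambda>x. poly [:0, 0, 0, - 241/19908, - 12050/131061, - 10726169/54348840, - 6075610/35779653, - 83297/711711, 1518541/37483446, 1398979/56936880, - 37355/2883342, - 52489/9197496, 58081/11009124:] x / (2 * x ^ (13 - 8) * poly (fst (G [2..<8] ([:cf_a 8, 1:], 1))) x)) \<longlongrightarrow> cf_C 8) at_top"
      unfolding GG C fst_conv poly_pCons poly_0 by real_asymp
  qed simp_all
qed

lemma mp9: "((\<lambda>n. real n ^ (9 + 1) * (PP (real n) - cf_R 9 n)) \<longlongrightarrow> cf_C 9) sequentially"
proof -
  have GG: "G [2..<9] ([:cf_a 9, 1:], 1) = ([:0, 0, 0, 0, 241/3318, 0, 95/79, 0, 1:], [:0, 0, 0, 241/3318, - 871/4740, 95/79, - 1/6, 1:])"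
    by (simp add: G_def Gstep_def upt_rec cf_a_def cf_a_even_def one_pCons)
  have C: "cf_C 9 = - 52489/18394992" by (simp add: cf_C_def)
  show ?thesis
  proof (rule mp_general)
    show "pnz [2..<9] ([:cf_a 9, 1:], 1)"
      by (simp add: G_def Gstep_def upt_rec cf_a_def cf_a_even_def one_pCons)
    show "smult 2 (Sp * fst (G [2..<9] ([:cf_a 9, 1:], 1))) - X14 * snd (G [2..<9] ([:cf_a 9, 1:], 1)) = [:0, 0, 0, 0, - 241/19908, 0, - 10726169/54348840, 0, - 83297/711711, 0, 1398979/56936880, 0, - 52489/9197496:]"
      unfolding GG by (simp add: Sp_def X14_def)
    show "((\<lambda>x. poly [:0, 0, 0, 0, - 241/19908, 0, - 10726169/54348840, 0, - 83297/711711, 0, 1398979/56936880, 0, - 52489/9197496:] x / (2 * x ^ (13 - 9) * poly (fst (G [2..<9] ([:cf_a 9, 1:], 1))) x)) \<longlongrightarrow> cf_C 9) at_top"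
      unfolding GG C fst_conv poly_pCons poly_0 by real_asymp
  qed simp_all
qed

lemma mp10: "((\<lambda>n. real n ^ (10 + 1) * (PP (real n) - cf_R 10 n)) \<longlongrightarrow> cf_C 10) sequentially"
proof -
  have GG: "G [2..<10] ([:cf_a 10, 1:], 1) = ([:0, 0, 0, 0, 52489/668052, 3549/5302, 4986455/3833346, 6510/2651, 4146631/3833346, 1:], [:0, 0, 0, 0, 9839791/20909160, 34814341/38333460, 52334129/23000076, 1753870/1916673, 1:])"
    by (simp add: G_def Gstep_def upt_rec cf_a_def cf_a_even_def one_pCons)
  have C: "cf_C 10 = - 2755095121/892586949408" by (simp add: cf_C_def)
  show ?thesis
  proof (rule mp_general)
    show "pnz [2..<10] ([:cf_a 10, 1:], 1)"
      by (simp add: G_def Gstep_def upt_rec cf_a_def cf_a_even_def one_pCons)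
    show "smult 2 (Sp * fst (G [2..<10] ([:cf_a 10, 1:], 1))) - X14 * snd (G [2..<10] ([:cf_a 10, 1:], 1)) = [:0, 0, 0, 0, - 52489/4008312, - 1183/10604, - 563005884641/2637188714160, - 121217/318120, - 4372176233/34534614114, - 333061/4549116, 73431008731/2762769129120, 20169451/1910628720, - 2755095121/446293474704:]"
      unfolding GG by (simp add: Sp_def X14_def)
    show "((\<lambda>x. poly [:0, 0, 0, 0, - 52489/4008312, - 1183/10604, - 563005884641/2637188714160, - 121217/318120, - 4372176233/34534614114, - 333061/4549116, 73431008731/2762769129120, 20169451/1910628720, - 2755095121/446293474704:] x / (2 * x ^ (13 - 10) * poly (fst (G [2..<10] ([:cf_a 10, 1:], 1))) x)) \<longlongrightarrow> cf_C 10) at_top"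
      unfolding GG C fst_conv poly_pCons poly_0 by real_asymp
  qed simp_all
qed

lemma mp11: "((\<lambda>n. real n ^ (11 + 1) * (PP (real n) - cf_R 11 n)) \<longlongrightarrow> cf_C 11) sequentially"
proof -
  have GG: "G [2..<11] ([:cf_a 11, 1:], 1) = ([:0, 0, 0, 0, 0, 0, 3549/5302, 0, 6510/2651, 0, 1:], [:0, 0, 0, 0, - 52489/668052, 3549/5302, - 62449/159060, 6510/2651, - 1/6, 1:])"
    by (simp add: G_def Gstep_def upt_rec cf_a_def cf_a_even_def one_pCons)
  have C: "cf_C 11 = 20169451/3821257440" by (simp add: cf_C_def)
  show ?thesis
  proof (rule mp_general)
    show "pnz [2..<11] ([:cf_a 11, 1:], 1)"
      by (simp add: G_def Gstep_def upt_rec cf_a_def cf_a_even_def one_pCons)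
    show "smult 2 (Sp * fst (G [2..<11] ([:cf_a 11, 1:], 1))) - X14 * snd (G [2..<11] ([:cf_a 11, 1:], 1)) = [:0, 0, 0, 0, 0, 0, - 1183/10604, 0, - 121217/318120, 0, - 333061/4549116, 0, 20169451/1910628720:]"
      unfolding GG by (simp add: Sp_def X14_def)
    show "((\<lambda>x. poly [:0, 0, 0, 0, 0, 0, - 1183/10604, 0, - 121217/318120, 0, - 333061/4549116, 0, 20169451/1910628720:] x / (2 * x ^ (13 - 11) * poly (fst (G [2..<11] ([:cf_a 11, 1:], 1))) x)) \<longlongrightarrow> cf_C 11) at_top"
      unfolding GG C fst_conv poly_pCons poly_0 by real_asymp
  qed simp_all
qed

lemma mp12: "((\<lambda>n. real n ^ (12 + 1) * (PP (real n) - cf_R 12 n)) \<longlongrightarrow> cf_C 12) sequentially"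
proof -
  have GG: "G [2..<12] ([:cf_a 12, 1:], 1) = ([:0, 0, 0, 0, 0, 20169451/150118540, 346894387749/303060463310, 21720531/7505927, 1654419387726/393978602303, 29378559/6823570, 306232774533/179081182865, 1:], [:0, 0, 0, 0, 0, 277289171997577/381856183770600, 87558092210421/39397860230300, 41348289424501/11819358069090, 143997359184/35816236573, 1658315464333/1074487097190, 1:])"
    by (simp add: G_def Gstep_def upt_rec cf_a_def cf_a_even_def one_pCons)
  have C: "cf_C 12 = 406806753641401/45071152103463200" by (simp add: cf_C_def)
  show ?thesis
  proof (rule mp_general)
    show "pnz [2..<12] ([:cf_a 12, 1:], 1)"
      by (simp add: G_def Gstep_def upt_rec cf_a_def cf_a_even_def one_pCons)
    show "smult 2 (Sp * fst (G [2..<12] ([:cf_a 12, 1:], 1))) - X14 * snd (G [2..<12] ([:cf_a 12, 1:], 1)) = [:0, 0, 0, 0, 0, - 20169451/900711240, - 115631462583/606120926620, - 106545809269/223540153200, - 51342487179207/78795720460600, - 5130903577/8586780488, - 141070807909731/1126778802586580, - 71521421431/2576034146400, 406806753641401/22535576051731600:]"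
      unfolding GG by (simp add: Sp_def X14_def)
    show "((\<lambda>x. poly [:0, 0, 0, 0, 0, - 20169451/900711240, - 115631462583/606120926620, - 106545809269/223540153200, - 51342487179207/78795720460600, - 5130903577/8586780488, - 141070807909731/1126778802586580, - 71521421431/2576034146400, 406806753641401/22535576051731600:] x / (2 * x ^ (13 - 12) * poly (fst (G [2..<12] ([:cf_a 12, 1:], 1))) x)) \<longlongrightarrow> cf_C 12) at_top"
      unfolding GG C fst_conv poly_pCons poly_0 by real_asymp
  qed simp_all
qed

lemma mp13: "((\<lambda>n. real n ^ (13 + 1) * (PP (real n) - cf_R 13 n)) \<longlongrightarrow> cf_C 13) sequentially"
proof -
  have GG: "G [2..<13] ([:cf_a 13, 1:], 1) = ([:0, 0, 0, 0, 0, 0, 20169451/150118540, 0, 21720531/7505927, 0, 29378559/6823570, 0, 1:], [:0, 0, 0, 0, 0, 20169451/150118540, - 3044404667/7274975400, 21720531/7505927, - 14348101/20470710, 29378559/6823570, - 1/6, 1:])"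
    by (simp add: G_def Gstep_def upt_rec cf_a_def cf_a_even_def one_pCons)
  have C: "cf_C 13 = - 71521421431/5152068292800" by (simp add: cf_C_def)
  show ?thesis
  proof (rule mp_general)
    show "pnz [2..<13] ([:cf_a 13, 1:], 1)"
      by (simp add: G_def Gstep_def upt_rec cf_a_def cf_a_even_def one_pCons)
    show "smult 2 (Sp * fst (G [2..<13] ([:cf_a 13, 1:], 1))) - X14 * snd (G [2..<13] ([:cf_a 13, 1:], 1)) = [:0, 0, 0, 0, 0, 0, - 20169451/900711240, 0, - 106545809269/223540153200, 0, - 5130903577/8586780488, 0, - 71521421431/2576034146400:]"
      unfolding GG by (simp add: Sp_def X14_def)
    show "((\<lambda>x. poly [:0, 0, 0, 0, 0, 0, - 20169451/900711240, 0, - 106545809269/223540153200, 0, - 5130903577/8586780488, 0, - 71521421431/2576034146400:] x / (2 * x ^ (13 - 13) * poly (fst (G [2..<13] ([:cf_a 13, 1:], 1))) x)) \<longlongrightarrow> cf_C 13) at_top"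
      unfolding GG C fst_conv poly_pCons poly_0 by real_asymp
  qed simp_all
qed

lemma main_part:
  assumes "1 \<le> k" "k \<le> 13"
  shows "((\<lambda>n. real n ^ (k + 1) * (PP (real n) - cf_R k n)) \<longlongrightarrow> cf_C k) sequentially"
proof -
  have "k = 1 \<or> k = 2 \<or> k = 3 \<or> k = 4 \<or> k = 5 \<or> k = 6 \<or> k = 7 \<or> k = 8 \<or> k = 9 \<or> k = 10 \<or> k = 11 \<or> k = 12 \<or> k = 13"
    using assms by presburger
  then show ?thesis
    using mp1 mp2 mp3 mp4 mp5 mp6 mp7 mp8 mp9 mp10 mp11 mp12 mp13 by (elim disjE) simp_all
qed

theorem theorem1:
  fixes k :: nat
  assumes "1 \<le> k" and "k \<le> 13"
  shows "((\<lambda>n. real n ^ (k + 1) * (cf_r k n - (euler_mascheroni :: real)))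
           \<longlongrightarrow> cf_C k) sequentially"
proof -
  have eq: "real n ^ (k + 1) * (cf_r k n - euler_mascheroni) =
      real n ^ (k+1) * EE n + real n ^ (k + 1) * (PP (real n) - cf_R k n)" for n
    unfolding cf_r_def EE_def harm_def by (simp add: inverse_eq_divide algebra_simps)
  have "((\<lambda>n. real n ^ (k+1) * EE n + real n ^ (k + 1) * (PP (real n) - cf_R k n)) \<longlongrightarrow> 0 + cf_C k) sequentially"
    by (intro tendsto_add EE_small main_part assms)
  then have "((\<lambda>n. real n ^ (k+1) * EE n + real n ^ (k + 1) * (PP (real n) - cf_R k n)) \<longlongrightarrow> cf_C k) sequentially"
    by (simp only: add_0_left)
  then show ?thesis by (simp only: eq)
qed

end
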